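(* The set $\mathcal{I}_{\mathrm{str}}(\Lambda \cap T_1)$ has the cardinality of the continuum.
   Context: Let $\mathbf{2}=\{0,1\}$. A partial function of arity $n$ on $\mathbf{2}$ is a map $f:\operatorname{dom} f\to\mathbf{2}$ with $\operatorname{dom} f\subseteq \mathbf{2}^n$; it is total if $\operatorname{dom} f=\mathbf{2}^n$. $P_{\mathbf{2}}$ is the set of all partial functions, $O_{\mathbf{2}}$ the set of total ones. Composition $F=f(g_1,\dots,g_n)$ is given by $F(\mathbf{x})=f(g_1(\mathbf{x}),\dots,g_n(\mathbf{x}))$ on $\operatorname{dom} F=\{\mathbf{x}\in\bigcap_i\operatorname{dom} g_i : (g_1(\mathbf{x}),\dots,g_n(\mathbf{x}))\in\operatorname{dom} f\}$. A partial clone is a composition-closed subset of $P_{\mathbf{2}}$ containing all projections; a total clone is one contained in $O_{\mathbf{2}}$. A partial clone $X$ is strong if it contains every restriction of each of its members. For a total clone $C$, $\mathcal{I}_{\mathrm{str}}(C)$ is the set of all strong partial clones $X$ with $X\cap O_{\mathbf{2}}=C$. $\Lambda$ is the total clone generated by $\land$ and the constants $c_0,c_1$; $T_1$ is the clone of total Boolean functions $f$ with $f(1,\dots,1)=1$. *)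

theory Defs
  imports Complex_Main
begin

text \<open>A partial Boolean function is a pair (n, f): n is the arity and
  f maps argument tuples (lists of length n) to Some value on its domain,
  None outside.  Arities are n >= 1.\<close>

type_synonym pfun = "nat \<times> (bool list \<Rightarrow> bool option)"

definition P2 :: "pfun set" where
  "P2 = {f. fst f \<ge> 1 \<and> (\<forall>xs. length xs \<noteq> fst f \<longrightarrow> snd f xs = None)}"

definition O2 :: "pfun set" where
  "O2 = {f \<in> P2. \<forall>xs. length xs = fst f \<longrightarrow> snd f xs \<noteq> None}"

definition proj :: "nat \<Rightarrow> nat \<Rightarrow> pfun" where
  "proj n i = (n, \<lambda>xs. if length xs = n then Some (xs ! i) else None)"

definition compose :: "pfun \<Rightarrow> pfun list \<Rightarrow> nat \<Rightarrow> pfun" where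
  "compose f gs m = (m, \<lambda>xs. if length xs = m then
      (case those (map (\<lambda>g. snd g xs) gs) of None \<Rightarrow> None | Some ys \<Rightarrow> snd f ys)
     else None)"

definition partial_clone :: "pfun set \<Rightarrow> bool" where
  "partial_clone X \<longleftrightarrow> X \<subseteq> P2
     \<and> (\<forall>n i. 1 \<le> n \<longrightarrow> i < n \<longrightarrow> proj n i \<in> X)
     \<and> (\<forall>f gs m. f \<in> X \<longrightarrow> length gs = fst f \<longrightarrow>
           (\<forall>g\<in>set gs. g \<in> X \<and> fst g = m) \<longrightarrow> compose f gs m \<in> X)"

definition total_clone :: "pfun set \<Rightarrow> bool" where
  "total_clone X \<longleftrightarrow> partial_clone X \<and> X \<subseteq> O2"

definition restriction_of :: "pfun \<Rightarrow> pfun \<Rightarrow> bool" where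
  "restriction_of g f \<longleftrightarrow> g \<in> P2 \<and> fst g = fst f \<and>
     (\<forall>xs v. snd g xs = Some v \<longrightarrow> snd f xs = Some v)"

definition strong :: "pfun set \<Rightarrow> bool" where
  "strong X \<longleftrightarrow> (\<forall>f\<in>X. \<forall>g. restriction_of g f \<longrightarrow> g \<in> X)"

inductive_set clone_gen :: "pfun set \<Rightarrow> pfun set" for F where
  gen: "f \<in> F \<Longrightarrow> f \<in> clone_gen F"
| proj: "1 \<le> n \<Longrightarrow> i < n \<Longrightarrow> proj n i \<in> clone_gen F"
| comp: "f \<in> clone_gen F \<Longrightarrow> length gs = fst f \<Longrightarrow>
     (\<And>g. g \<in> set gs \<Longrightarrow> g \<in> clone_gen F \<and> fst g = m) \<Longrightarrow>
     compose f gs m \<in> clone_gen F"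

definition and2 :: pfun where
  "and2 = (2, \<lambda>xs. if length xs = 2 then Some (xs ! 0 \<and> xs ! 1) else None)"

definition const1 :: "bool \<Rightarrow> pfun" where
  "const1 b = (1, \<lambda>xs. if length xs = 1 then Some b else None)"

definition Lambda :: "pfun set" where
  "Lambda = clone_gen {and2, const1 False, const1 True}"

definition T1 :: "pfun set" where
  "T1 = {f \<in> O2. snd f (replicate (fst f) True) = Some True}"

definition I_str :: "pfun set \<Rightarrow> pfun set set" where
  "I_str C = {X. partial_clone X \<and> strong X \<and> X \<inter> O2 = C}"

end

theory Submission
  imports Defs "HOL-Analysis.Abstract_Topology_2"
begin

lemma those_map_Some:
  "those (map h xs) = Some ys \<longleftrightarrow> (\<forall>x\<in>set xs. h x \<noteq> None) \<and> ys = map (\<lambda>x. the (h x)) xs"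
  by (induction xs arbitrary: ys) (auto split: option.splits)

lemma those_map_None:
  "those (map h xs) = None \<longleftrightarrow> (\<exists>x\<in>set xs. h x = None)"
  by (induction xs) (auto split: option.splits)

definition pres :: "pfun \<Rightarrow> 'i set \<Rightarrow> (('i \<Rightarrow> bool) \<Rightarrow> bool) \<Rightarrow> bool" where
  "pres f I P \<longleftrightarrow> (\<forall>cs. length cs = fst f \<longrightarrow> (\<forall>c\<in>set cs. P c) \<longrightarrow>
     (\<forall>i\<in>I. snd f (map (\<lambda>c. c i) cs) \<noteq> None) \<longrightarrow>
     P (\<lambda>i. the (snd f (map (\<lambda>c. c i) cs))))"

definition ext_on :: "'i set \<Rightarrow> (('i \<Rightarrow> bool) \<Rightarrow> bool) \<Rightarrow> bool" where
  "ext_on I P \<longleftrightarrow> (\<forall>v w. (\<forall>i\<in>I. v i = w i) \<longrightarrow> P v = P w)"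

lemma pres_proj:
  assumes "i < n" shows "pres (proj n i) I P"
  unfolding pres_def proj_def
proof (intro allI impI)
  fix cs :: "('a \<Rightarrow> bool) list"
  assume l: "length cs = fst (n, \<lambda>xs. if length xs = n then Some (xs ! i) else None)"
    and P: "\<forall>c\<in>set cs. P c"
  have "(\<lambda>j. the (snd (n, \<lambda>xs. if length xs = n then Some (xs ! i) else None) (map (\<lambda>c. c j) cs))) = cs ! i"
    using l assms by auto
  moreover have "cs ! i \<in> set cs" using l assms by auto
  ultimately show "P (\<lambda>j. the (snd (n, \<lambda>xs. if length xs = n then Some (xs ! i) else None) (map (\<lambda>c. c j) cs)))"
    using P by simp
qed

lemma pres_restr:
  assumes E: "ext_on I P" and pf: "pres f I P" and r: "restriction_of g f"
  shows "pres g I P"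
  unfolding pres_def
proof (intro allI impI)
  fix cs assume l: "length cs = fst g" and P: "\<forall>c\<in>set cs. P c"
    and d: "\<forall>i\<in>I. snd g (map (\<lambda>c. c i) cs) \<noteq> None"
  have eq: "\<forall>i\<in>I. snd f (map (\<lambda>c. c i) cs) = snd g (map (\<lambda>c. c i) cs)"
    using d r unfolding restriction_of_def by force
  have "P (\<lambda>i. the (snd f (map (\<lambda>c. c i) cs)))"
    using pf l P d eq r unfolding pres_def restriction_of_def by (metis)
  then show "P (\<lambda>i. the (snd g (map (\<lambda>c. c i) cs)))"
    using E eq unfolding ext_on_def by (metis (no_types, lifting))
qed

lemma pres_compose:
  assumes E: "ext_on I P" and pf: "pres f I P" and lg: "length gs = fst f"
    and pg: "\<forall>g\<in>set gs. pres g I P \<and> fst g = m"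
  shows "pres (Defs.compose f gs m) I P"
  unfolding pres_def
proof (intro allI impI)
  fix cs assume l: "length cs = fst (Defs.compose f gs m)" and P: "\<forall>c\<in>set cs. P c"
    and d: "\<forall>i\<in>I. snd (Defs.compose f gs m) (map (\<lambda>c. c i) cs) \<noteq> None"
  have lm: "length cs = m" using l by (simp add: Defs.compose_def)
  define ds where "ds = map (\<lambda>g. (\<lambda>i. the (snd g (map (\<lambda>c. c i) cs)))) gs"
  have dd: "\<forall>i\<in>I. (\<forall>g\<in>set gs. snd g (map (\<lambda>c. c i) cs) \<noteq> None) \<and>
      snd f (map (\<lambda>g. the (snd g (map (\<lambda>c. c i) cs))) gs) \<noteq> None"
  proof
    fix i assume "i \<in> I"
    then have "snd (Defs.compose f gs m) (map (\<lambda>c. c i) cs) \<noteq> None" using d by blast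
    then show "(\<forall>g\<in>set gs. snd g (map (\<lambda>c. c i) cs) \<noteq> None) \<and>
      snd f (map (\<lambda>g. the (snd g (map (\<lambda>c. c i) cs))) gs) \<noteq> None"
      using lm unfolding Defs.compose_def
      by (auto split: option.splits simp: those_map_Some those_map_None)
  qed
  have rowds: "\<And>i. map (\<lambda>d. d i) ds = map (\<lambda>g. the (snd g (map (\<lambda>c. c i) cs))) gs"
    unfolding ds_def by simp
  have Pds: "\<forall>d\<in>set ds. P d"
  proof
    fix d assume "d \<in> set ds"
    then obtain g where g: "g \<in> set gs" "d = (\<lambda>i. the (snd g (map (\<lambda>c. c i) cs)))"
      unfolding ds_def by auto
    have "pres g I P" "fst g = m" using pg g by auto
    then show "P d" using g dd P lm unfolding pres_def by auto
  qed
  have lds: "length ds = fst f" using lg unfolding ds_def by simp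
  have "P (\<lambda>i. the (snd f (map (\<lambda>d. d i) ds)))"
    using pf lds Pds dd rowds unfolding pres_def by metis
  moreover have "\<forall>i\<in>I. the (snd f (map (\<lambda>d. d i) ds)) = the (snd (Defs.compose f gs m) (map (\<lambda>c. c i) cs))"
  proof
    fix i assume "i \<in> I"
    then have "\<forall>g\<in>set gs. snd g (map (\<lambda>c. c i) cs) \<noteq> None" using dd by blast
    then show "the (snd f (map (\<lambda>d. d i) ds)) = the (snd (Defs.compose f gs m) (map (\<lambda>c. c i) cs))"
      using lm rowds unfolding Defs.compose_def by (simp add: those_map_Some[THEN iffD2])
  qed
  ultimately show "P (\<lambda>i. the (snd (Defs.compose f gs m) (map (\<lambda>c. c i) cs)))"
    using E unfolding ext_on_def by (metis (no_types, lifting))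
qed

definition meet :: "bool list \<Rightarrow> bool list \<Rightarrow> bool list" where
  "meet a b = map2 (\<and>) a b"

lemma length_meet[simp]: "length (meet a b) = min (length a) (length b)"
  by (simp add: meet_def)

lemma nth_meet[simp]: "i < length a \<Longrightarrow> i < length b \<Longrightarrow> meet a b ! i = (a ! i \<and> b ! i)"
  by (simp add: meet_def)

lemma meet_map: "meet (map p xs) (map q xs) = map (\<lambda>x. p x \<and> q x) xs"
  by (induction xs) (auto simp: meet_def)

definition homf :: "pfun \<Rightarrow> bool" where
  "homf f \<longleftrightarrow> (\<forall>a b. length a = fst f \<longrightarrow> length b = fst f \<longrightarrow>
      the (snd f (meet a b)) = (the (snd f a) \<and> the (snd f b)))"

lemma O2_iff: "f \<in> O2 \<longleftrightarrow> fst f \<ge> 1 \<and> (\<forall>xs. (snd f xs \<noteq> None) = (length xs = fst f))"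
  unfolding O2_def P2_def by auto

lemma proj_O2: "1 \<le> n \<Longrightarrow> proj n i \<in> O2"
  unfolding O2_iff proj_def by auto

lemma compose_O2:
  assumes f: "f \<in> O2" and l: "length gs = fst f" and g: "\<forall>g\<in>set gs. g \<in> O2 \<and> fst g = m"
  shows "Defs.compose f gs m \<in> O2"
proof -
  have "gs \<noteq> []" using f l unfolding O2_iff by auto
  then obtain g0 where "g0 \<in> set gs" by (cases gs) auto
  then have m: "m \<ge> 1" using g unfolding O2_iff by auto
  have "\<forall>xs. (snd (Defs.compose f gs m) xs \<noteq> None) = (length xs = m)"
  proof
    fix xs
    show "(snd (Defs.compose f gs m) xs \<noteq> None) = (length xs = m)"
    proof (cases "length xs = m")
      case True
      then have "\<forall>g\<in>set gs. snd g xs \<noteq> None" using g unfolding O2_iff by auto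
      then have "those (map (\<lambda>g. snd g xs) gs) = Some (map (\<lambda>g. the (snd g xs)) gs)"
        by (simp add: those_map_Some)
      moreover have "snd f (map (\<lambda>g. the (snd g xs)) gs) \<noteq> None"
        using f l unfolding O2_iff by auto
      ultimately show ?thesis using True unfolding Defs.compose_def by simp
    next
      case False
      then show ?thesis unfolding Defs.compose_def by simp
    qed
  qed
  then show ?thesis using m unfolding O2_iff Defs.compose_def by simp
qed

lemma compose_hom:
  assumes f: "f \<in> O2" "homf f" and l: "length gs = fst f"
    and g: "\<forall>g\<in>set gs. g \<in> O2 \<and> homf g \<and> fst g = m"
  shows "homf (Defs.compose f gs m)"
  unfolding homf_def
proof (intro allI impI)
  fix a b :: "bool list" assume la: "length a = fst (Defs.compose f gs m)" and lb: "length b = fst (Defs.compose f gs m)"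
  then have la': "length a = m" and lb': "length b = m" by (auto simp: Defs.compose_def)
  have val: "\<And>xs. length xs = m \<Longrightarrow> snd (Defs.compose f gs m) xs = snd f (map (\<lambda>g. the (snd g xs)) gs)"
  proof -
    fix xs :: "bool list" assume "length xs = m"
    moreover have "\<forall>g\<in>set gs. snd g xs \<noteq> None" using g \<open>length xs = m\<close> unfolding O2_iff by auto
    ultimately show "snd (Defs.compose f gs m) xs = snd f (map (\<lambda>g. the (snd g xs)) gs)"
      unfolding Defs.compose_def by (simp add: those_map_Some[THEN iffD2])
  qed
  have "map (\<lambda>g. the (snd g (meet a b))) gs = map (\<lambda>g. the (snd g a) \<and> the (snd g b)) gs"
    using g la' lb' unfolding homf_def by auto
  also have "\<dots> = meet (map (\<lambda>g. the (snd g a)) gs) (map (\<lambda>g. the (snd g b)) gs)"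
    by (simp add: meet_map)
  finally have e: "map (\<lambda>g. the (snd g (meet a b))) gs = meet (map (\<lambda>g. the (snd g a)) gs) (map (\<lambda>g. the (snd g b)) gs)" .
  show "the (snd (Defs.compose f gs m) (meet a b)) = (the (snd (Defs.compose f gs m) a) \<and> the (snd (Defs.compose f gs m) b))"
    using val[of "meet a b"] val[OF la'] val[OF lb'] la' lb' e f l unfolding homf_def by simp
qed

lemma Lambda_hom:
  assumes "f \<in> clone_gen {and2, const1 False, const1 True}"
  shows "f \<in> O2 \<and> homf f"
  using assms
proof (induction rule: clone_gen.induct)
  case (gen f)
  then have "f = and2 \<or> f = const1 False \<or> f = const1 True" by auto
  then show ?case
    unfolding and2_def const1_def O2_iff homf_def by (auto split: if_splits)
next
  case (proj n i)
  then show ?case unfolding O2_iff homf_def proj_def by auto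
next
  case (comp f gs m)
  then show ?case using compose_O2 compose_hom by blast
qed

definition conjf :: "nat \<Rightarrow> nat set \<Rightarrow> pfun" where
  "conjf n B = (n, \<lambda>xs. if length xs = n then Some (\<forall>i\<in>B. xs ! i) else None)"

definition vec :: "nat \<Rightarrow> nat set \<Rightarrow> bool list" where
  "vec n F = map (\<lambda>i. i \<notin> F) [0..<n]"

lemma length_vec[simp]: "length (vec n F) = n" by (simp add: vec_def)

lemma vec_zeros: "length xs = n \<Longrightarrow> xs = vec n {i. i < n \<and> \<not> xs ! i}"
  by (auto simp: vec_def list_eq_iff_nth_eq)

lemma vec_insert: "vec n (insert i F) = meet (vec n F) (vec n {i})"
  by (auto simp: vec_def list_eq_iff_nth_eq)

lemma vec_empty: "vec n {} = replicate n True"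
  by (auto simp: vec_def list_eq_iff_nth_eq)

lemma hom_conj_aux:
  assumes f: "f \<in> O2" "homf f" "snd f (replicate (fst f) True) = Some True"
    and B: "B = {i. i < fst f \<and> snd f (vec (fst f) {i}) = Some False}"
    and F: "finite F" "F \<subseteq> {..<fst f}"
  shows "snd f (vec (fst f) F) = Some (F \<inter> B = {})"
  using F
proof (induction F rule: finite_induct)
  case empty
  then show ?case using f by (simp add: vec_empty)
next
  case (insert i F)
  let ?n = "fst f"
  have IH: "snd f (vec ?n F) = Some (F \<inter> B = {})" using insert by auto
  have i: "i < ?n" using insert by auto
  obtain v where v: "snd f (vec ?n {i}) = Some v" using f unfolding O2_iff by fastforce
  have iB: "(i \<in> B) = (\<not> v)" using v i B by auto
  obtain w where w: "snd f (vec ?n (insert i F)) = Some w" using f unfolding O2_iff by fastforce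
  have "w = (the (snd f (vec ?n F)) \<and> the (snd f (vec ?n {i})))"
    using f(2) w unfolding homf_def by (metis length_vec option.sel vec_insert)
  then have "w = ((F \<inter> B = {}) \<and> v)" using IH v by simp
  then show ?case using w iB by auto
qed

lemma hom_conj:
  assumes f: "f \<in> O2" "homf f" "snd f (replicate (fst f) True) = Some True"
  shows "f = conjf (fst f) {i. i < fst f \<and> snd f (vec (fst f) {i}) = Some False}"
proof -
  let ?n = "fst f"
  let ?B = "{i. i < fst f \<and> snd f (vec (fst f) {i}) = Some False}"
  have AX: "\<forall>xs. snd f xs = snd (conjf ?n ?B) xs"
  proof
    fix xs :: "bool list"
    show "snd f xs = snd (conjf ?n ?B) xs"
    proof (cases "length xs = ?n")
      case True
      let ?Z = "{i. i < ?n \<and> \<not> xs ! i}"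
      have e1: "snd f xs = snd f (vec ?n ?Z)" by (rule arg_cong[OF vec_zeros[OF True]])
      have fin: "finite ?Z" by simp
      have sub: "?Z \<subseteq> {..<?n}" by auto
      have e2: "snd f (vec ?n ?Z) = Some (?Z \<inter> ?B = {})" by (rule hom_conj_aux[OF f refl fin sub])
      have e3: "(?Z \<inter> ?B = {}) = (\<forall>i\<in>?B. xs ! i)" by blast
      have e4: "snd (conjf ?n ?B) xs = Some (\<forall>i\<in>?B. xs ! i)" using True by (simp add: conjf_def)
      show ?thesis using e1 e2 e3 e4 by simp
    next
      case False
      have "snd f xs = None" using f(1) False unfolding O2_iff by blast
      moreover have "snd (conjf ?n ?B) xs = None" using False by (simp add: conjf_def)
      ultimately show ?thesis by (simp only:)
    qed
  qed
  have "snd f = snd (conjf ?n ?B)"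
  proof
    fix xs show "snd f xs = snd (conjf ?n ?B) xs" using AX by blast
  qed
  moreover have "fst f = fst (conjf ?n ?B)" by (simp add: conjf_def)
  ultimately show ?thesis by (rule prod_eqI[rotated])
qed

lemma conj_Lambda:
  assumes n: "1 \<le> n" and B: "B \<subseteq> {..<n}"
  shows "conjf n B \<in> Lambda"
proof -
  have "finite B" using B finite_subset by blast
  then show ?thesis using B
  proof (induction B rule: finite_induct)
    case empty
    have "conjf n {} = Defs.compose (const1 True) [proj n 0] n"
      by (auto simp: conjf_def Defs.compose_def const1_def proj_def fun_eq_iff)
    moreover have "Defs.compose (const1 True) [proj n 0] n \<in> Lambda"
    proof -
      have "const1 True \<in> clone_gen {and2, const1 False, const1 True}" by (rule clone_gen.gen) simp
      moreover have "proj n 0 \<in> clone_gen {and2, const1 False, const1 True}" by (rule clone_gen.proj) (use n in auto)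
      ultimately show ?thesis unfolding Lambda_def
        by (intro clone_gen.comp) (auto simp: const1_def proj_def)
    qed
    ultimately show ?case by simp
  next
    case (insert i B)
    have i: "i < n" using insert by auto
    have "snd (conjf n (insert i B)) xs = snd (Defs.compose and2 [conjf n B, proj n i] n) xs" for xs
      by (cases "length xs = n") (auto simp: conjf_def Defs.compose_def and2_def proj_def)
    then have "conjf n (insert i B) = Defs.compose and2 [conjf n B, proj n i] n"
      by (simp add: prod_eq_iff fun_eq_iff conjf_def Defs.compose_def)
    moreover have "Defs.compose and2 [conjf n B, proj n i] n \<in> Lambda"
    proof -
      have "and2 \<in> clone_gen {and2, const1 False, const1 True}" by (rule clone_gen.gen) simp
      moreover have "proj n i \<in> clone_gen {and2, const1 False, const1 True}" by (rule clone_gen.proj) (use n i in auto)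
      moreover have "conjf n B \<in> clone_gen {and2, const1 False, const1 True}" using insert unfolding Lambda_def by auto
      ultimately show ?thesis unfolding Lambda_def
        by (intro clone_gen.comp) (auto simp: and2_def proj_def conjf_def)
    qed
    ultimately show ?case by simp
  qed
qed

lemma conj_O2: "1 \<le> n \<Longrightarrow> conjf n B \<in> O2"
  unfolding O2_iff conjf_def by auto

lemma LT1_char: "Lambda \<inter> T1 = {conjf n B | n B. 1 \<le> n \<and> B \<subseteq> {..<n}}"
proof
  show "Lambda \<inter> T1 \<subseteq> {conjf n B | n B. 1 \<le> n \<and> B \<subseteq> {..<n}}"
  proof
    fix f assume "f \<in> Lambda \<inter> T1"
    then have f: "f \<in> O2" "homf f" "snd f (replicate (fst f) True) = Some True"
      using Lambda_hom unfolding Lambda_def T1_def by auto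
    then have "fst f \<ge> 1" unfolding O2_iff by auto
    then show "f \<in> {conjf n B | n B. 1 \<le> n \<and> B \<subseteq> {..<n}}"
      using hom_conj[OF f] by blast
  qed
next
  show "{conjf n B | n B. 1 \<le> n \<and> B \<subseteq> {..<n}} \<subseteq> Lambda \<inter> T1"
    using conj_Lambda conj_O2 unfolding T1_def by (auto simp: conjf_def subset_iff)
qed

definition QI :: "nat set" where "QI = {0,1,2,3}"
definition QP :: "(nat \<Rightarrow> bool) \<Rightarrow> bool" where "QP v \<longleftrightarrow> (v 2 = (v 0 \<and> v 1)) \<and> v 3"
definition GI :: "nat \<Rightarrow> nat set set" where "GI n = {Z. Z \<subseteq> {..<n} \<and> card Z = 2} \<union> {{..<n}}"
definition GP :: "nat \<Rightarrow> (nat set \<Rightarrow> bool) \<Rightarrow> bool" where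
  "GP n v \<longleftrightarrow> (\<exists>A. \<forall>Z\<in>GI n. (\<not> v Z) = (Z \<inter> A \<noteq> {}))"
definition XS :: "nat set \<Rightarrow> pfun set" where
  "XS S = {f \<in> P2. pres f QI QP \<and> (\<forall>n\<in>S. pres f (GI n) (GP n))}"

lemma ext_QP: "ext_on QI QP" unfolding ext_on_def QI_def QP_def by auto
lemma ext_GP: "ext_on (GI n) (GP n)" unfolding ext_on_def GP_def by metis

lemma compose_P2:
  assumes f: "f \<in> P2" and l: "length gs = fst f" and g: "\<forall>g\<in>set gs. g \<in> P2 \<and> fst g = m"
  shows "Defs.compose f gs m \<in> P2"
proof -
  have "gs \<noteq> []" using f l unfolding P2_def by auto
  then obtain g0 where "g0 \<in> set gs" by (cases gs) auto
  then have m: "m \<ge> 1" using g unfolding P2_def by auto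
  then show ?thesis unfolding P2_def Defs.compose_def by auto
qed

lemma XS_pc: "partial_clone (XS S)"
  unfolding partial_clone_def
proof (intro conjI allI impI)
  show "XS S \<subseteq> P2" unfolding XS_def by auto
next
  fix n i :: nat assume "1 \<le> n" "i < n"
  then show "proj n i \<in> XS S" unfolding XS_def using proj_O2[of n i]
    by (auto simp: O2_def intro: pres_proj)
next
  fix f gs m assume f: "f \<in> XS S" and l: "length gs = fst f" and g: "\<forall>g\<in>set gs. g \<in> XS S \<and> fst g = m"
  have "Defs.compose f gs m \<in> P2" using f l g compose_P2[of f gs m] unfolding XS_def by auto
  moreover have "pres (Defs.compose f gs m) QI QP"
    using f l g pres_compose[OF ext_QP] unfolding XS_def by auto
  moreover have "\<forall>n\<in>S. pres (Defs.compose f gs m) (GI n) (GP n)"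
    using f l g pres_compose[OF ext_GP] unfolding XS_def by auto
  ultimately show "Defs.compose f gs m \<in> XS S" unfolding XS_def by auto
qed

lemma XS_strong: "strong (XS S)"
  unfolding strong_def
proof (intro ballI allI impI)
  fix f g assume f: "f \<in> XS S" and r: "restriction_of g f"
  then show "g \<in> XS S" using pres_restr[OF ext_QP] pres_restr[OF ext_GP]
    unfolding XS_def restriction_of_def[of g f] by (auto intro: pres_restr[OF ext_QP _ r] pres_restr[OF ext_GP _ r])
qed

lemma row_nth: "length cs = n \<Longrightarrow> i < n \<Longrightarrow> map (\<lambda>c. c x) cs ! i = (cs ! i) x"
  by simp

lemma conj_val: "B \<subseteq> {..<n} \<Longrightarrow> length cs = n \<Longrightarrow>
   the (snd (conjf n B) (map (\<lambda>c. c x) cs)) = (\<forall>i\<in>B. (cs ! i) x)"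
  unfolding conjf_def by (auto simp: subset_iff)

lemma conj_pres_Q:
  assumes B: "B \<subseteq> {..<n}" shows "pres (conjf n B) QI QP"
  unfolding pres_def
proof (intro allI impI)
  fix cs :: "(nat \<Rightarrow> bool) list" assume l: "length cs = fst (conjf n B)" and P: "\<forall>c\<in>set cs. QP c"
  have l': "length cs = n" using l by (simp add: conjf_def)
  have Pi: "\<And>i. i \<in> B \<Longrightarrow> QP (cs ! i)" using P B l' by auto
  show "QP (\<lambda>x. the (snd (conjf n B) (map (\<lambda>c. c x) cs)))"
    unfolding conj_val[OF B l'] using Pi unfolding QP_def by auto
qed

lemma conj_pres_G:
  assumes B: "B \<subseteq> {..<n}" shows "pres (conjf n B) (GI k) (GP k)"
  unfolding pres_def
proof (intro allI impI)
  fix cs :: "(nat set \<Rightarrow> bool) list" assume l: "length cs = fst (conjf n B)" and P: "\<forall>c\<in>set cs. GP k c"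
  have l': "length cs = n" using l by (simp add: conjf_def)
  have "\<forall>i\<in>B. \<exists>A. \<forall>Z\<in>GI k. (\<not> (cs ! i) Z) = (Z \<inter> A \<noteq> {})"
    using P B l' unfolding GP_def by (auto simp: subset_iff)
  then obtain Af where Af: "\<forall>i\<in>B. \<forall>Z\<in>GI k. (\<not> (cs ! i) Z) = (Z \<inter> Af i \<noteq> {})"
    by metis
  have "\<forall>Z\<in>GI k. (\<not> (\<forall>i\<in>B. (cs ! i) Z)) = (Z \<inter> (\<Union>i\<in>B. Af i) \<noteq> {})"
    using Af by blast
  then show "GP k (\<lambda>x. the (snd (conjf n B) (map (\<lambda>c. c x) cs)))"
    unfolding conj_val[OF B l'] GP_def by blast
qed

lemma total_pres_Q:
  assumes f: "f \<in> O2" and p: "pres f QI QP"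
  shows "homf f \<and> snd f (replicate (fst f) True) = Some True"
proof -
  let ?n = "fst f"
  have key: "the (snd f (meet a b)) = (the (snd f a) \<and> the (snd f b)) \<and> the (snd f (replicate ?n True))"
    if la: "length a = ?n" and lb: "length b = ?n" for a b
  proof -
    define cs where "cs = map (\<lambda>i. (\<lambda>x::nat. if x = 0 then a ! i else if x = 1 then b ! i
        else if x = 2 then (a ! i \<and> b ! i) else True)) [0..<?n]"
    have lc: "length cs = ?n" unfolding cs_def by simp
    have P: "\<forall>c\<in>set cs. QP c" unfolding cs_def QP_def by auto
    have r0: "map (\<lambda>c. c 0) cs = a" using la unfolding cs_def by (auto simp: list_eq_iff_nth_eq)
    have r1: "map (\<lambda>c. c 1) cs = b" using lb unfolding cs_def by (auto simp: list_eq_iff_nth_eq)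
    have r2: "map (\<lambda>c. c 2) cs = meet a b" using la lb unfolding cs_def by (auto simp: list_eq_iff_nth_eq)
    have r3: "map (\<lambda>c. c 3) cs = replicate ?n True" unfolding cs_def by (auto simp: list_eq_iff_nth_eq)
    have d: "\<forall>x\<in>QI. snd f (map (\<lambda>c. c x) cs) \<noteq> None" using f lc unfolding O2_iff by auto
    have "QP (\<lambda>x. the (snd f (map (\<lambda>c. c x) cs)))" using p lc P d unfolding pres_def by blast
    then show ?thesis unfolding QP_def using r0 r1 r2 r3 by simp
  qed
  have "homf f" unfolding homf_def using key by blast
  moreover have "snd f (replicate ?n True) \<noteq> None" using f unfolding O2_iff by auto
  moreover have "the (snd f (replicate ?n True))" using key[of "replicate ?n True" "replicate ?n True"] by simp
  ultimately show ?thesis by auto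
qed

lemma XS_total: "XS S \<inter> O2 = Lambda \<inter> T1"
proof
  show "XS S \<inter> O2 \<subseteq> Lambda \<inter> T1"
  proof
    fix f assume f: "f \<in> XS S \<inter> O2"
    then have fO: "f \<in> O2" and p: "pres f QI QP" unfolding XS_def by auto
    have h: "homf f" "snd f (replicate (fst f) True) = Some True" using total_pres_Q[OF fO p] by auto
    have "fst f \<ge> 1" using fO unfolding O2_iff by auto
    then show "f \<in> Lambda \<inter> T1" unfolding LT1_char using hom_conj[OF fO h] by blast
  qed
next
  show "Lambda \<inter> T1 \<subseteq> XS S \<inter> O2"
  proof
    fix f assume "f \<in> Lambda \<inter> T1"
    then obtain n B where f: "f = conjf n B" "1 \<le> n" "B \<subseteq> {..<n}" unfolding LT1_char by blast
    then show "f \<in> XS S \<inter> O2" unfolding XS_def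
      using conj_O2[of n B] conj_pres_Q[of B n] conj_pres_G[of B n] by (auto simp: O2_def)
  qed
qed

definition zs :: "bool list \<Rightarrow> nat set" where "zs xs = {i. i < length xs \<and> \<not> xs ! i}"

definition fam :: "nat \<Rightarrow> pfun" where
  "fam k = (k, \<lambda>xs. if length xs = k \<and> (card (zs xs) = 2 \<or> zs xs = {..<k})
                     then Some (card (zs xs) = 2) else None)"

lemma fam_P2: "1 \<le> k \<Longrightarrow> fam k \<in> P2" unfolding P2_def fam_def by auto

lemma fam_pres_Q: assumes "1 \<le> k" shows "pres (fam k) QI QP"
  unfolding pres_def
proof (intro allI impI)
  fix cs :: "(nat \<Rightarrow> bool) list"
  assume l: "length cs = fst (fam k)" and P: "\<forall>c\<in>set cs. QP c"
    and d: "\<forall>x\<in>QI. snd (fam k) (map (\<lambda>c. c x) cs) \<noteq> None"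
  have nn: "snd (fam k) (map (\<lambda>c. c 3) cs) \<noteq> None" using d unfolding QI_def by auto
  have c3: "(cs ! i) 3" if "i < length cs" for i
  proof -
    have "cs ! i \<in> set cs" using that by simp
    then show ?thesis using P unfolding QP_def by blast
  qed
  have z: "zs (map (\<lambda>c. c 3) cs) = {}" unfolding zs_def using c3 by auto
  have "0 \<in> {..<k}" using assms by auto
  then have "{} \<noteq> {..<k}" by blast
  then have "snd (fam k) (map (\<lambda>c. c 3) cs) = None" using z by (simp add: fam_def)
  then show "QP (\<lambda>x. the (snd (fam k) (map (\<lambda>c. c x) cs)))" using nn by simp
qed

lemma fam_not_pres: assumes k: "3 \<le> k" shows "\<not> pres (fam k) (GI k) (GP k)"
proof
  assume p: "pres (fam k) (GI k) (GP k)"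
  define cs where "cs = map (\<lambda>i. (\<lambda>Z::nat set. i \<notin> Z)) [0..<k]"
  have l: "length cs = fst (fam k)" unfolding cs_def fam_def by simp
  have P: "\<forall>c\<in>set cs. GP k c"
  proof
    fix c assume "c \<in> set cs"
    then obtain i where c: "c = (\<lambda>Z. i \<notin> Z)" unfolding cs_def by auto
    have "\<forall>Z\<in>GI k. (\<not> c Z) = (Z \<inter> {i} \<noteq> {})" unfolding c by auto
    then show "GP k c" unfolding GP_def by blast
  qed
  have zrow: "zs (map (\<lambda>c. c Z) cs) = Z" if "Z \<in> GI k" for Z
    using that unfolding zs_def cs_def GI_def by auto
  have val: "snd (fam k) (map (\<lambda>c. c Z) cs) = Some (card Z = 2)" if "Z \<in> GI k" for Z
    using zrow[OF that] that unfolding fam_def cs_def GI_def by auto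
  have d: "\<forall>Z\<in>GI k. snd (fam k) (map (\<lambda>c. c Z) cs) \<noteq> None" using val by auto
  have "GP k (\<lambda>Z. the (snd (fam k) (map (\<lambda>c. c Z) cs)))" using p l P d unfolding pres_def by blast
  then obtain A where A: "\<forall>Z\<in>GI k. (\<not> the (snd (fam k) (map (\<lambda>c. c Z) cs))) = (Z \<inter> A \<noteq> {})"
    unfolding GP_def by blast
  have full: "{..<k} \<in> GI k" unfolding GI_def by auto
  have "\<not> the (snd (fam k) (map (\<lambda>c. c {..<k}) cs))" using val[OF full] k by simp
  then have "{..<k} \<inter> A \<noteq> {}" using A full by blast
  then obtain a where a: "a < k" "a \<in> A" by auto
  define b where "b = (if a = 0 then 1 else 0::nat)"
  have b: "b < k" "b \<noteq> a" unfolding b_def using k by auto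
  have pair: "{a, b} \<in> GI k" unfolding GI_def using a b by auto
  have "the (snd (fam k) (map (\<lambda>c. c {a,b}) cs))" using val[OF pair] b by simp
  then have "{a,b} \<inter> A = {}" using A pair by blast
  then show False using a by auto
qed

lemma pair_GI: "a < n \<Longrightarrow> b < n \<Longrightarrow> a \<noteq> b \<Longrightarrow> {a, b} \<in> GI n"
  unfolding GI_def by auto

lemma full_GI: "{..<n} \<in> GI n" unfolding GI_def by auto

lemma GI_cases: "Z \<in> GI n \<Longrightarrow> Z = {..<n} \<or> (\<exists>a b. a < n \<and> b < n \<and> a \<noteq> b \<and> Z = {a, b})"
  unfolding GI_def by (auto simp: card_2_iff)

lemma card_le4:
  assumes "finite X" "finite Y" "card X \<le> 2" "card Y \<le> 2" shows "card (X \<union> Y) \<le> 4"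
  using card_Un_le[of X Y] assms by linarith

lemma comb:
  fixes W :: "nat set \<Rightarrow> nat set"
  assumes m5: "5 \<le> m" and n5: "5 \<le> n" and mn: "m \<noteq> n"
    and Wdef: "\<And>Z. W Z = {j. j < m \<and> (\<exists>i\<in>Z. i \<in> A j)}"
    and dom: "\<And>Z. Z \<in> GI n \<Longrightarrow> card (W Z) = 2 \<or> W Z = {..<m}"
  shows "\<exists>A'. \<forall>Z\<in>GI n. (card (W Z) \<noteq> 2) = (Z \<inter> A' \<noteq> {})"
proof -
  have finW: "finite (W Z)" for Z using Wdef[of Z] by (simp add: Wdef)
  have Wsub: "W Z \<subseteq> {..<m}" for Z by (auto simp: Wdef)
  have Wmono: "Z \<subseteq> Z' \<Longrightarrow> W Z \<subseteq> W Z'" for Z Z' by (auto simp: Wdef)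
  have Wpair: "W {a, b} = W {a} \<union> W {b}" for a b by (auto simp: Wdef)
  have cardm: "card {..<m} = m" by simp
  let ?U = "W {..<n}"
  show ?thesis
  proof (cases "card ?U = 2")
    case True
    have "\<forall>Z\<in>GI n. card (W Z) = 2"
    proof
      fix Z assume Z: "Z \<in> GI n"
      then have "Z \<subseteq> {..<n}" unfolding GI_def by auto
      then have sub: "W Z \<subseteq> ?U" by (rule Wmono)
      show "card (W Z) = 2"
      proof (rule ccontr)
        assume "card (W Z) \<noteq> 2"
        then have "W Z = {..<m}" using dom[OF Z] by auto
        then have "m \<le> card ?U" using sub card_mono[OF finW[of "{..<n}"] sub] cardm by simp
        then show False using True m5 by simp
      qed
    qed
    then show ?thesis by (intro exI[of _ "{}"]) auto
  next
    case False
    then have Ufull: "?U = {..<m}" using dom[OF full_GI] by auto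
    define A' where "A' = {i. i < n \<and> (\<forall>j<n. j \<noteq> i \<longrightarrow> card (W {i, j}) \<noteq> 2)}"
    have small: "card (W {i}) \<le> 2" if "i < n" "i \<notin> A'" for i
    proof -
      have "\<not> (\<forall>j<n. j \<noteq> i \<longrightarrow> card (W {i, j}) \<noteq> 2)" using that by (simp add: A'_def)
      then obtain j where j: "j < n" "j \<noteq> i" "card (W {i, j}) = 2" by blast
      have "W {i} \<subseteq> W {i, j}" by (rule Wmono) auto
      then show ?thesis using card_mono[OF finW[of "{i, j}"]] j(3) by simp
    qed
    have full_case: "{..<n} \<inter> A' \<noteq> {}"
    proof (rule ccontr)
      assume "\<not> {..<n} \<inter> A' \<noteq> {}"
      then have noA: "\<And>i. i < n \<Longrightarrow> i \<notin> A'" by auto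
      have sm: "\<And>i. i < n \<Longrightarrow> card (W {i}) \<le> 2" using small noA by blast
      have two: "card (W {i} \<union> W {i'}) = 2" if "i < n" "i' < n" "i \<noteq> i'" for i i'
      proof -
        have "card (W {i} \<union> W {i'}) \<le> 4" using card_le4[OF finW finW sm sm] that by blast
        moreover have "W {i, i'} \<noteq> {..<m}"
        proof
          assume "W {i, i'} = {..<m}"
          then have "card (W {i} \<union> W {i'}) = m" using Wpair[of i i'] by simp
          then show False using \<open>card (W {i} \<union> W {i'}) \<le> 4\<close> m5 by simp
        qed
        ultimately have "W {i, i'} \<noteq> {..<m}" by blast
        then show ?thesis using dom[OF pair_GI[OF that]] Wpair[of i i'] by auto
      qed
      show False
      proof (cases "\<exists>i<n. card (W {i}) = 2")
        case True
        then obtain i where i: "i < n" "card (W {i}) = 2" by auto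
        have "W {i'} \<subseteq> W {i}" if "i' < n" for i'
        proof (cases "i' = i")
          case False
          have "W {i} \<subseteq> W {i} \<union> W {i'}" by auto
          moreover have "card (W {i} \<union> W {i'}) = card (W {i})" using two[OF i(1) that] i(2) False by auto
          ultimately have "W {i} = W {i} \<union> W {i'}"
            using card_subset_eq[of "W {i} \<union> W {i'}" "W {i}"] finW by auto
          then show ?thesis by auto
        qed simp
        then have Us: "?U \<subseteq> W {i}" by (auto simp: Wdef)
        have "card ?U \<le> 2" using card_mono[OF finW[of "{i}"] Us] i(2) by simp
        then show False using Ufull m5 by simp
      next
        case False
        have le1: "card (W {i}) \<le> 1" if "i < n" for i using sm[OF that] False that by auto
        have one: "card (W {i}) = 1" if "i < n" for i
        proof -
          define i' where "i' = (if i = 0 then 1 else (0::nat))"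
          have "i' < n" "i' \<noteq> i" using n5 unfolding i'_def by auto
          then have "card (W {i} \<union> W {i'}) = 2" using two[OF that] by auto
          moreover have "card (W {i} \<union> W {i'}) \<le> card (W {i}) + card (W {i'})" by (rule card_Un_le)
          ultimately show ?thesis using le1[OF that] le1[OF \<open>i' < n\<close>] by linarith
        qed
        define g where "g i = the_elem (W {i})" for i
        have Wg: "W {i} = {g i}" if "i < n" for i
        proof -
          from one[OF that] obtain x where "W {i} = {x}" by (rule card_1_singletonE)
          then show ?thesis unfolding g_def by simp
        qed
        have inj: "inj_on g {..<n}"
        proof (rule inj_onI)
          fix i i' assume "i \<in> {..<n}" "i' \<in> {..<n}" "g i = g i'"
          then show "i = i'" using two[of i i'] Wg by fastforce
        qed
        have "?U = g ` {..<n}" using Wg by (auto simp: Wdef)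
        then have "card ?U = n" using card_image[OF inj] by simp
        then show False using Ufull mn by simp
      qed
    qed
    have "\<forall>Z\<in>GI n. (card (W Z) \<noteq> 2) = (Z \<inter> A' \<noteq> {})"
    proof
      fix Z assume Z: "Z \<in> GI n"
      from GI_cases[OF Z] show "(card (W Z) \<noteq> 2) = (Z \<inter> A' \<noteq> {})"
      proof
        assume Zf: "Z = {..<n}"
        then show ?thesis using Ufull False full_case by auto
      next
        assume "\<exists>a b. a < n \<and> b < n \<and> a \<noteq> b \<and> Z = {a, b}"
        then obtain a b where ab: "a < n" "b < n" "a \<noteq> b" "Z = {a, b}" by blast
        show ?thesis
        proof
          assume nv: "card (W Z) \<noteq> 2"
          show "Z \<inter> A' \<noteq> {}"
          proof (rule ccontr)
            assume "\<not> Z \<inter> A' \<noteq> {}"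
            then have "a \<notin> A'" "b \<notin> A'" using ab by auto
            then have "card (W {a}) \<le> 2" "card (W {b}) \<le> 2" using small ab by auto
            then have "card (W Z) \<le> 4" using card_le4[OF finW finW] Wpair ab by auto
            moreover have "W Z = {..<m}" using dom[OF Z] nv by auto
            ultimately show False using m5 by simp
          qed
        next
          assume "Z \<inter> A' \<noteq> {}"
          then have "a \<in> A' \<or> b \<in> A'" using ab by auto
          then show "card (W Z) \<noteq> 2"
          proof
            assume "a \<in> A'" then show ?thesis using ab unfolding A'_def by auto
          next
            assume "b \<in> A'" then have "card (W {b, a}) \<noteq> 2" using ab unfolding A'_def by auto
            then show ?thesis using ab by (simp add: insert_commute)
          qed
        qed
      qed
    qed
    then show ?thesis by blast
  qed
qed

lemma fam_pres:
  assumes m5: "5 \<le> m" and n5: "5 \<le> n" and mn: "m \<noteq> n"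
  shows "pres (fam m) (GI n) (GP n)"
  unfolding pres_def
proof (intro allI impI)
  fix cs :: "(nat set \<Rightarrow> bool) list"
  assume l: "length cs = fst (fam m)" and P: "\<forall>c\<in>set cs. GP n c"
    and d: "\<forall>Z\<in>GI n. snd (fam m) (map (\<lambda>c. c Z) cs) \<noteq> None"
  have lm: "length cs = m" using l by (simp add: fam_def)
  have "\<forall>j<m. \<exists>A. \<forall>Z\<in>GI n. (\<not> (cs ! j) Z) = (Z \<inter> A \<noteq> {})"
  proof (intro allI impI)
    fix j assume "j < m"
    then have "cs ! j \<in> set cs" using lm by simp
    then show "\<exists>A. \<forall>Z\<in>GI n. (\<not> (cs ! j) Z) = (Z \<inter> A \<noteq> {})" using P unfolding GP_def by blast
  qed
  then obtain A where A: "\<forall>j<m. \<forall>Z\<in>GI n. (\<not> (cs ! j) Z) = (Z \<inter> A j \<noteq> {})" by metis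
  define W where "W Z = {j. j < m \<and> (\<exists>i\<in>Z. i \<in> A j)}" for Z
  have zsW: "zs (map (\<lambda>c. c Z) cs) = W Z" if "Z \<in> GI n" for Z
    using A that lm unfolding zs_def W_def by auto
  have dom: "card (W Z) = 2 \<or> W Z = {..<m}" if "Z \<in> GI n" for Z
  proof -
    have "snd (fam m) (map (\<lambda>c. c Z) cs) \<noteq> None" using d that by blast
    then have "card (zs (map (\<lambda>c. c Z) cs)) = 2 \<or> zs (map (\<lambda>c. c Z) cs) = {..<m}"
      using lm by (simp add: fam_def split: if_splits)
    then show ?thesis using zsW[OF that] by simp
  qed
  have val: "the (snd (fam m) (map (\<lambda>c. c Z) cs)) = (card (W Z) = 2)" if "Z \<in> GI n" for Z
  proof -
    have "snd (fam m) (map (\<lambda>c. c Z) cs) \<noteq> None" using d that by blast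
    then have "the (snd (fam m) (map (\<lambda>c. c Z) cs)) = (card (zs (map (\<lambda>c. c Z) cs)) = 2)"
      using lm by (auto simp: fam_def split: if_splits)
    then show ?thesis using zsW[OF that] by simp
  qed
  obtain A' where A': "\<forall>Z\<in>GI n. (card (W Z) \<noteq> 2) = (Z \<inter> A' \<noteq> {})"
    using comb[OF m5 n5 mn W_def dom] by blast
  have "\<forall>Z\<in>GI n. (\<not> the (snd (fam m) (map (\<lambda>c. c Z) cs))) = (Z \<inter> A' \<noteq> {})"
    using A' val by simp
  then show "GP n (\<lambda>Z. the (snd (fam m) (map (\<lambda>c. c Z) cs)))" unfolding GP_def by blast
qed

definition Phi :: "nat set \<Rightarrow> pfun set" where "Phi S = XS ((\<lambda>k. k + 5) ` S)"

lemma fam_in: "fam (k + 5) \<in> Phi S \<longleftrightarrow> k \<notin> S"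
proof
  assume "fam (k + 5) \<in> Phi S"
  then have "\<forall>n\<in>(\<lambda>k. k + 5) ` S. pres (fam (k + 5)) (GI n) (GP n)" unfolding Phi_def XS_def by auto
  then show "k \<notin> S" using fam_not_pres[of "k + 5"] by auto
next
  assume k: "k \<notin> S"
  have "\<forall>n\<in>(\<lambda>k. k + 5) ` S. pres (fam (k + 5)) (GI n) (GP n)"
  proof
    fix n assume "n \<in> (\<lambda>k. k + 5) ` S"
    then obtain j where "j \<in> S" "n = j + 5" by auto
    then show "pres (fam (k + 5)) (GI n) (GP n)" using k by (intro fam_pres) auto
  qed
  then show "fam (k + 5) \<in> Phi S" unfolding Phi_def XS_def using fam_P2[of "k+5"] fam_pres_Q[of "k+5"] by auto
qed

lemma Phi_inj: "inj Phi"
proof (rule injI)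
  fix S S' assume "Phi S = Phi S'"
  then have "\<forall>k. (k \<notin> S) = (k \<notin> S')" using fam_in by metis
  then show "S = S'" by blast
qed

lemma Phi_in: "Phi S \<in> I_str (Lambda \<inter> T1)"
  unfolding I_str_def Phi_def using XS_pc XS_strong XS_total by blast

definition enc :: "pfun \<Rightarrow> nat" where
  "enc f = to_nat (fst f, map (snd f) (List.n_lists (fst f) [True, False]))"

lemma enc_inj: "inj_on enc P2"
proof (rule inj_onI)
  fix f g assume f: "f \<in> P2" and g: "g \<in> P2" and e: "enc f = enc g"
  have e2: "(fst f, map (snd f) (List.n_lists (fst f) [True, False])) =
      (fst g, map (snd g) (List.n_lists (fst g) [True, False]))"
    using e unfolding enc_def by (simp only: to_nat_split)
  then have fst: "fst f = fst g" by simp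
  have "snd f xs = snd g xs" for xs
  proof (cases "length xs = fst f")
    case True
    have "xs \<in> set (List.n_lists (fst f) [True, False])"
      using True by (auto simp: set_n_lists)
    moreover have "map (snd f) (List.n_lists (fst f) [True, False]) = map (snd g) (List.n_lists (fst f) [True, False])"
      using e2 fst by simp
    ultimately show ?thesis unfolding map_eq_conv by blast
  next
    case False
    then show ?thesis using f g fst unfolding P2_def by auto
  qed
  then show "f = g" using fst by (simp add: prod_eq_iff fun_eq_iff)
qed

lemma Istr_sub: "X \<in> I_str C \<Longrightarrow> X \<subseteq> P2"
  unfolding I_str_def partial_clone_def by auto

lemma lep1: "I_str (Lambda \<inter> T1) \<lesssim> (UNIV :: nat set set)"
  unfolding lepoll_def
proof (intro exI conjI)
  show "inj_on (\<lambda>X. enc ` X) (I_str (Lambda \<inter> T1))"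
  proof (rule inj_onI)
    fix X Y assume X: "X \<in> I_str (Lambda \<inter> T1)" and Y: "Y \<in> I_str (Lambda \<inter> T1)" and e: "enc ` X = enc ` Y"
    show "X = Y" using inj_on_image_eq_iff[OF enc_inj Istr_sub[OF X] Istr_sub[OF Y]] e by blast
  qed
qed auto

lemma lep2: "(UNIV :: nat set set) \<lesssim> I_str (Lambda \<inter> T1)"
  unfolding lepoll_def using Phi_inj Phi_in by blast

theorem mainTheorem6:
  shows "\<exists>h. bij_betw h (I_str (Lambda \<inter> T1)) (UNIV :: real set)"
proof -
  have "I_str (Lambda \<inter> T1) \<approx> (UNIV :: nat set set)" by (rule lepoll_antisym[OF lep1 lep2])
  then have "I_str (Lambda \<inter> T1) \<approx> (UNIV :: real set)" using nat_sets_eqpoll_reals eqpoll_trans by blast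
  then show ?thesis unfolding eqpoll_def .
qed

end
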